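(* Let $N\ge2$ and let $P$ be a symmetric probability density on $\Lambda^N$. Then there is a sequence $(P_n)$ of symmetric probability densities on $\Lambda^N$ such that each $P_n$ satisfies the condition: there is a measurable set $A\subset\Lambda$ of positive measure such that for every $x_N\in A$ there is a constant $\gamma(x_N)>0$ with $P_n(\cdot,x_N)\ge\gamma(x_N)\rho_n^{(N-1)}$ a.e. on $\Lambda^{N-1}$ (where $\rho_n^{(N-1)}$ is the $(N-1)$-marginal of $P_n$); and $P_n\to P$ in $L^1(\Lambda^N;d^Nx)$. If in addition the measure $dx$ is finite and $P$ is essentially bounded, then the sequence can be chosen so that moreover $P_n\to P$ in $L^\infty(\Lambda^N;d^Nx)$.
   Context: $(\Lambda;dx)$ is a complete $\sigma$-finite measure space with non-zero measure $dx$; $d^kx$ denotes the completion of $dx^{\otimes k}$ on $\Lambda^k$. A symmetric probability density on $\Lambda^N$ is a nonnegative, measurable, symmetric function $P$ with $\int_{\Lambda^N}P\,d^Nx=1$; its $(N-1)$-marginal is $\rho^{(N-1)}(x_1,\dots,x_{N-1}):=\int_\Lambda P(x_1,\dots,x_N)\,dx_N$. *)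

theory Defs
  imports "HOL-Probability.Probability"
begin

text \<open>The completed product measure d^k x on Lambda^k.  Points of Lambda^k are
  extensional functions on the index set {..<k} (coordinates 0,...,k-1).\<close>
definition prodM :: "'a measure \<Rightarrow> nat \<Rightarrow> (nat \<Rightarrow> 'a) measure" where
  "prodM M k = completion (PiM {..<k} (\<lambda>_. M))"

definition sym_prob_density :: "'a measure \<Rightarrow> nat \<Rightarrow> ((nat \<Rightarrow> 'a) \<Rightarrow> real) \<Rightarrow> bool" where
  "sym_prob_density M N P \<longleftrightarrow>
     P \<in> borel_measurable (prodM M N) \<and>
     (\<forall>x\<in>space (prodM M N). 0 \<le> P x) \<and>
     (\<forall>\<sigma> x. \<sigma> permutes {..<N} \<longrightarrow> x \<in> space (prodM M N) \<longrightarrow> P (x \<circ> \<sigma>) = P x) \<and>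
     (\<integral>\<^sup>+ x. ennreal (P x) \<partial>prodM M N) = 1"

definition marginal :: "'a measure \<Rightarrow> nat \<Rightarrow> ((nat \<Rightarrow> 'a) \<Rightarrow> real) \<Rightarrow> (nat \<Rightarrow> 'a) \<Rightarrow> ennreal" where
  "marginal M N P y = (\<integral>\<^sup>+ t. ennreal (P (y(N - 1 := t))) \<partial>M)"

definition lower_bound_cond :: "'a measure \<Rightarrow> nat \<Rightarrow> ((nat \<Rightarrow> 'a) \<Rightarrow> real) \<Rightarrow> bool" where
  "lower_bound_cond M N P \<longleftrightarrow>
     (\<exists>A. A \<in> sets M \<and> emeasure M A > 0 \<and>
        (\<forall>xN\<in>A. \<exists>\<gamma>::real. \<gamma> > 0 \<and>
            (AE y in prodM M (N - 1). ennreal \<gamma> * marginal M N P y \<le> ennreal (P (y(N - 1 := xN))))))"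

end

theory Submission
  imports Defs
begin

definition SB :: "nat \<Rightarrow> 'a set \<Rightarrow> (nat \<Rightarrow> 'a) set" where
  "SB N B = PiE {..<N} (\<lambda>_. B)"

definition ftr :: "nat \<Rightarrow> ((nat \<Rightarrow> 'a) \<Rightarrow> real) \<Rightarrow> 'a set \<Rightarrow> real \<Rightarrow> (nat \<Rightarrow> 'a) \<Rightarrow> real" where
  "ftr N P B K x = max 0 (min (P x) K) * indicator (SB N B) x"

definition Qd :: "'a measure \<Rightarrow> nat \<Rightarrow> ((nat \<Rightarrow> 'a) \<Rightarrow> real) \<Rightarrow> 'a set \<Rightarrow> real \<Rightarrow> real \<Rightarrow> (nat \<Rightarrow> 'a) \<Rightarrow> real" where
  "Qd M N P B K e x = (ftr N P B K x + e * indicator (SB N B) x) /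
     (integral\<^sup>L (prodM M N) (ftr N P B K) + e * measure (prodM M N) (SB N B))"

lemma space_prodM: "space (prodM M N) = PiE {..<N} (\<lambda>_. space M)"
  unfolding prodM_def by (simp add: space_PiM)

lemma SB_sets: "B \<in> sets M \<Longrightarrow> SB N B \<in> sets (prodM M N)"
  unfolding prodM_def SB_def by (intro sets_completionI_sets sets_PiM_I_finite) auto

lemma SB_emeasure:
  assumes "sigma_finite_measure M" "B \<in> sets M"
  shows "emeasure (prodM M N) (SB N B) = emeasure M B ^ N"
proof -
  interpret product_sigma_finite "\<lambda>_. M" using assms(1) by (simp add: product_sigma_finite_def)
  have "SB N B \<in> sets (PiM {..<N} (\<lambda>_. M))"
    unfolding SB_def by (intro sets_PiM_I_finite) (auto simp: assms)
  then show ?thesis unfolding prodM_def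
    by (simp add: SB_def emeasure_PiM assms)
qed

lemma SB_perm:
  assumes "\<sigma> permutes {..<N}" "x \<in> extensional {..<N}"
  shows "x \<circ> \<sigma> \<in> SB N B \<longleftrightarrow> x \<in> SB N B"
proof
  assume a: "x \<circ> \<sigma> \<in> SB N B"
  show "x \<in> SB N B" unfolding SB_def
  proof (intro PiE_I)
    fix i assume i: "i \<in> {..<N}"
    then have "inv \<sigma> i \<in> {..<N}" by (rule permutes_in_image[OF permutes_inv[OF assms(1)], THEN iffD2])
    from PiE_mem[OF a[unfolded SB_def comp_def] this] have "x (\<sigma> (inv \<sigma> i)) \<in> B" by simp
    moreover have "\<sigma> (inv \<sigma> i) = i" by (rule permutes_inverses(1)[OF assms(1)])
    ultimately show "x i \<in> B" by simp
  next
    fix i assume "i \<notin> {..<N}" then show "x i = undefined" using assms(2) by (simp add: extensional_def)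
  qed
next
  assume a: "x \<in> SB N B"
  show "x \<circ> \<sigma> \<in> SB N B" unfolding SB_def
  proof (intro PiE_I)
    fix i assume "i \<in> {..<N}"
    then have "\<sigma> i \<in> {..<N}" by (rule permutes_in_image[OF assms(1), THEN iffD2])
    from PiE_mem[OF a[unfolded SB_def] this] have "x (\<sigma> i) \<in> B" by simp
    then show "(x \<circ> \<sigma>) i \<in> B" by simp
  next
    fix i assume i: "i \<notin> {..<N}"
    then have "\<sigma> i = i" by (rule permutes_not_in[OF assms(1)])
    then show "(x \<circ> \<sigma>) i = undefined"
      using assms(2) i by (simp add: extensional_def)
  qed
qed

lemma ftr_meas:
  assumes "P \<in> borel_measurable (prodM M N)" "B \<in> sets M"
  shows "ftr N P B K \<in> borel_measurable (prodM M N)"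
  unfolding ftr_def
  using assms SB_sets[OF assms(2), of N]
  by (intro borel_measurable_times borel_measurable_max borel_measurable_min borel_measurable_const
       borel_measurable_indicator) auto

lemma ftr_nonneg: "0 \<le> ftr N P B K x" unfolding ftr_def by simp
lemma ftr_le: "0 \<le> K \<Longrightarrow> ftr N P B K x \<le> K * indicator (SB N B) x"
  unfolding ftr_def by (simp add: indicator_def)


lemma SB_upd_not:
  assumes "t \<notin> B" "0 < N"
  shows "y(N - 1 := t) \<notin> SB N B"
proof
  assume a: "y(N - 1 := t) \<in> SB N B"
  have "N - 1 \<in> {..<N}" using assms(2) by simp
  from PiE_mem[OF a[unfolded SB_def] this] have "(y(N - 1 := t)) (N - 1) \<in> B" .
  then have "t \<in> B" by (simp only: fun_upd_same)
  then show False using assms(1) by (rule notE[rotated])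
qed

lemma SB_upd_not2:
  assumes "i < N - 1" "y i \<notin> B"
  shows "y(N - 1 := t) \<notin> SB N B"
proof
  assume a: "y(N - 1 := t) \<in> SB N B"
  have "i \<in> {..<N}" using assms(1) by simp
  from PiE_mem[OF a[unfolded SB_def] this] have "(y(N - 1 := t)) i \<in> B" .
  moreover have "i \<noteq> N - 1" using assms(1) by simp
  ultimately have "y i \<in> B" by simp
  then show False using assms(2) by (rule notE[rotated])
qed

lemma SB_upd_in:
  assumes "y \<in> PiE {..<N - 1} (\<lambda>_. B)" "t \<in> B" "0 < N"
  shows "y(N - 1 := t) \<in> SB N B"
proof -
  obtain n where n: "N = Suc n" using assms(3) by (cases N) auto
  have "{..<N} = insert (N - 1) {..<N - 1}" unfolding n by (simp add: lessThan_Suc)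
  then show ?thesis unfolding SB_def using PiE_fun_upd[OF assms(2) assms(1)] by simp
qed

context
  fixes M :: "'a measure" and N :: nat and P :: "(nat \<Rightarrow> 'a) \<Rightarrow> real" and B :: "'a set" and K e :: real
  assumes sf: "sigma_finite_measure M" and N: "N \<ge> 2" and dens: "sym_prob_density M N P"
    and B: "B \<in> sets M" "0 < emeasure M B" "emeasure M B < \<infinity>" and K: "0 \<le> K" and e: "0 < e"
begin

lemma Pm: "P \<in> borel_measurable (prodM M N)"
  using dens unfolding sym_prob_density_def by simp

lemma S_sets: "SB N B \<in> sets (prodM M N)" by (rule SB_sets[OF B(1)])

lemma S_em: "emeasure (prodM M N) (SB N B) = emeasure M B ^ N"
  by (rule SB_emeasure[OF sf B(1)])

lemma S_fin: "emeasure (prodM M N) (SB N B) < \<infinity>"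
  unfolding S_em using B(3) by (simp add: power_less_top_ennreal)

lemma S_meas_pos: "0 < measure (prodM M N) (SB N B)"
proof -
  have "emeasure (prodM M N) (SB N B) = ennreal (measure M B ^ N)"
  proof -
    have "emeasure M B = ennreal (measure M B)" by (rule emeasure_eq_ennreal_measure) (use B(3) in auto)
    then show ?thesis using S_em by (simp add: ennreal_power)
  qed
  then have "measure (prodM M N) (SB N B) = measure M B ^ N"
    by (simp add: measure_def)
  moreover have "0 < measure M B" using B by (simp add: measure_def enn2real_positive_iff)
  ultimately show ?thesis by simp
qed

lemma f_int: "integrable (prodM M N) (ftr N P B K)"
proof (rule Bochner_Integration.integrable_bound)
  show "integrable (prodM M N) (\<lambda>x. K * indicator (SB N B) x)"
    by (intro integrable_mult_right integrable_real_indicator S_sets S_fin)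
  show "ftr N P B K \<in> borel_measurable (prodM M N)" by (rule ftr_meas[OF Pm B(1)])
  show "AE x in prodM M N. norm (ftr N P B K x) \<le> norm (K * indicator (SB N B) x)"
  proof (intro AE_I2)
    fix x
    show "norm (ftr N P B K x) \<le> norm (K * indicator (SB N B) x)"
      using ftr_le[OF K, where x=x and N=N and P=P and B=B] ftr_nonneg[of N P B K x] K
      by (simp add: abs_mult)
  qed
qed

definition "dd = integral\<^sup>L (prodM M N) (ftr N P B K) + e * measure (prodM M N) (SB N B)"

lemma dd_pos: "0 < dd"
proof -
  have "0 \<le> integral\<^sup>L (prodM M N) (ftr N P B K)" by (intro integral_nonneg_AE) (simp add: ftr_nonneg)
  then show ?thesis unfolding dd_def using e S_meas_pos by (simp add: add_nonneg_pos)
qed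

lemma Q_eq: "Qd M N P B K e x = (ftr N P B K x + e * indicator (SB N B) x) / dd"
  unfolding Qd_def dd_def by simp

lemma Q_int: "integrable (prodM M N) (Qd M N P B K e)"
  unfolding Q_eq[abs_def]
  by (intro integrable_divide_zero Bochner_Integration.integrable_add f_int integrable_mult_right
      integrable_real_indicator S_sets S_fin)

lemma Q_integral: "integral\<^sup>L (prodM M N) (Qd M N P B K e) = 1"
proof -
  have "integral\<^sup>L (prodM M N) (Qd M N P B K e) =
     (integral\<^sup>L (prodM M N) (ftr N P B K) + e * measure (prodM M N) (SB N B)) / dd"
    unfolding Q_eq[abs_def]
    apply (subst integral_divide_zero)
    apply (subst Bochner_Integration.integral_add)
      apply (rule f_int)
     apply (intro integrable_mult_right integrable_real_indicator S_sets S_fin)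
    apply (simp add: S_sets S_fin)
    done
  then show ?thesis using dd_pos unfolding dd_def by simp
qed

lemma Q_nonneg: "0 \<le> Qd M N P B K e x"
  unfolding Q_eq using dd_pos e by (intro divide_nonneg_nonneg add_nonneg_nonneg ftr_nonneg mult_nonneg_nonneg) auto

lemma Q_le: "Qd M N P B K e x \<le> (K + e) / dd"
proof -
  have "ftr N P B K x + e * indicator (SB N B) x \<le> K + e"
    using ftr_le[OF K, where x=x and N=N and P=P and B=B] K e by (cases "x \<in> SB N B") auto
  then show ?thesis unfolding Q_eq using dd_pos by (simp add: divide_right_mono)
qed

lemma Q_sym: "sym_prob_density M N (Qd M N P B K e)"
  unfolding sym_prob_density_def
proof (intro conjI allI impI ballI)
  show "Qd M N P B K e \<in> borel_measurable (prodM M N)" using Q_int by auto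
  show "0 \<le> Qd M N P B K e x" for x by (rule Q_nonneg)
  show "(\<integral>\<^sup>+ x. ennreal (Qd M N P B K e x) \<partial>prodM M N) = 1"
    using nn_integral_eq_integral[OF Q_int] Q_integral Q_nonneg by simp
  fix \<sigma> x assume \<sigma>: "\<sigma> permutes {..<N}" and x: "x \<in> space (prodM M N)"
  have ext: "x \<in> extensional {..<N}" using x unfolding space_prodM by (simp add: PiE_def)
  have Pe: "P (x \<circ> \<sigma>) = P x" using dens \<sigma> x unfolding sym_prob_density_def by blast
  have Ie: "indicator (SB N B) (x \<circ> \<sigma>) = (indicator (SB N B) x :: real)"
    using SB_perm[OF \<sigma> ext, where B=B] by (simp add: indicator_def)
  show "Qd M N P B K e (x \<circ> \<sigma>) = Qd M N P B K e x"
    unfolding Q_eq ftr_def Pe Ie ..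
qed

lemma Q_zero: "x \<notin> SB N B \<Longrightarrow> Qd M N P B K e x = 0"
  unfolding Q_eq ftr_def by simp

lemma Q_ge: "x \<in> SB N B \<Longrightarrow> e / dd \<le> Qd M N P B K e x"
  unfolding Q_eq using dd_pos ftr_nonneg[of N P B K x] by (simp add: divide_right_mono)

lemma Q_lb: "lower_bound_cond M N (Qd M N P B K e)"
  unfolding lower_bound_cond_def
proof (intro exI[of _ B] conjI ballI)
  show "B \<in> sets M" by (rule B(1))
  show "0 < emeasure M B" by (rule B(2))
  fix xN assume xN: "xN \<in> B"
  define mB where "mB = measure M B"
  have eB: "emeasure M B = ennreal mB" unfolding mB_def
    by (rule emeasure_eq_ennreal_measure) (use B(3) in auto)
  have mB: "0 < mB" using B(2) eB by auto
  define c where "c = (K + e) / dd"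
  have c: "0 \<le> c" unfolding c_def using K e dd_pos by simp
  define \<gamma> where "\<gamma> = e / ((K + e) * mB)"
  have \<gamma>: "0 < \<gamma>" unfolding \<gamma>_def using K e mB by simp
  have Ke: "K + e \<noteq> 0" using K e by simp
  have key: "\<gamma> * (c * mB) = e / dd" unfolding \<gamma>_def c_def using Ke mB dd_pos
    by (simp add: divide_simps)
  have N0: "0 < N" using N by simp
  have marg_le: "marginal M N (Qd M N P B K e) y \<le> ennreal c * emeasure M B" for y
  proof -
    have "marginal M N (Qd M N P B K e) y \<le> (\<integral>\<^sup>+ t. ennreal c * indicator B t \<partial>M)"
      unfolding marginal_def
    proof (rule nn_integral_mono)
      fix t
      show "ennreal (Qd M N P B K e (y(N - 1 := t))) \<le> ennreal c * indicator B t"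
      proof (cases "t \<in> B")
        case True
        then show ?thesis using Q_le[of "y(N - 1 := t)"] unfolding c_def by (simp add: ennreal_leI)
      next
        case False
        then show ?thesis using Q_zero[OF SB_upd_not[OF False N0]] by simp
      qed
    qed
    also have "\<dots> = ennreal c * emeasure M B" by (rule nn_integral_cmult_indicator[OF B(1)])
    finally show ?thesis .
  qed
  show "\<exists>\<gamma>::real. \<gamma> > 0 \<and> (AE y in prodM M (N - 1). ennreal \<gamma> * marginal M N (Qd M N P B K e) y
          \<le> ennreal (Qd M N P B K e (y(N - 1 := xN))))"
  proof (intro exI[of _ \<gamma>] conjI AE_I2)
    show "0 < \<gamma>" by (rule \<gamma>)
    fix y assume y: "y \<in> space (prodM M (N - 1))"
    show "ennreal \<gamma> * marginal M N (Qd M N P B K e) y \<le> ennreal (Qd M N P B K e (y(N - 1 := xN)))"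
    proof (cases "y \<in> PiE {..<N - 1} (\<lambda>_. B)")
      case True
      have "ennreal \<gamma> * marginal M N (Qd M N P B K e) y \<le> ennreal \<gamma> * (ennreal c * emeasure M B)"
        by (intro mult_left_mono marg_le) auto
      also have "\<dots> = ennreal (\<gamma> * (c * mB))" using \<gamma> c mB eB by (simp add: ennreal_mult)
      also have "\<dots> = ennreal (e / dd)" by (simp add: key)
      also have "\<dots> \<le> ennreal (Qd M N P B K e (y(N - 1 := xN)))"
        by (intro ennreal_leI Q_ge SB_upd_in[OF True xN N0])
      finally show ?thesis .
    next
      case False
      have ext: "y \<in> extensional {..<N - 1}" using y unfolding space_prodM by (simp add: PiE_def)
      obtain i where i: "i < N - 1" "y i \<notin> B"
        using False ext unfolding PiE_def by auto
      have "marginal M N (Qd M N P B K e) y = 0"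
        unfolding marginal_def using Q_zero[OF SB_upd_not2[where y=y and i=i and N=N and B=B, OF i]] by simp
      then show ?thesis by simp
    qed
  qed
qed

end

lemma P_int:
  assumes dens: "sym_prob_density M N P"
  shows "integrable (prodM M N) P" "integral\<^sup>L (prodM M N) P = 1"
proof -
  have Pm: "P \<in> borel_measurable (prodM M N)" and nn: "\<forall>x\<in>space (prodM M N). 0 \<le> P x"
    and one: "(\<integral>\<^sup>+ x. ennreal (P x) \<partial>prodM M N) = 1"
    using dens unfolding sym_prob_density_def by auto
  have "(\<integral>\<^sup>+ x. ennreal (norm (P x)) \<partial>prodM M N) = (\<integral>\<^sup>+ x. ennreal (P x) \<partial>prodM M N)"
    using nn by (intro nn_integral_cong) auto
  then show int: "integrable (prodM M N) P" using one Pm by (intro integrableI_bounded) auto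
  have "ennreal (integral\<^sup>L (prodM M N) P) = 1"
    using nn_integral_eq_integral[OF int] nn one by simp
  moreover have "0 \<le> integral\<^sup>L (prodM M N) P" using nn by (intro integral_nonneg_AE AE_I2) auto
  ultimately show "integral\<^sup>L (prodM M N) P = 1"
    by (metis ennreal_1 ennreal_inj zero_le_one)
qed

lemma conv_L1:
  fixes M :: "'a measure" and N :: nat and P :: "(nat \<Rightarrow> 'a) \<Rightarrow> real"
    and B :: "nat \<Rightarrow> 'a set" and K e :: "nat \<Rightarrow> real"
  assumes sf: "sigma_finite_measure M" and N: "N \<ge> 2" and dens: "sym_prob_density M N P"
    and B1: "\<And>k. B k \<in> sets M" and B2: "\<And>k. 0 < emeasure M (B k)" and B3: "\<And>k. emeasure M (B k) < \<infinity>"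
    and K: "\<And>k. 0 \<le> K k" and e: "\<And>k. 0 < e k"
    and e0: "e \<longlonglongrightarrow> 0" and em0: "(\<lambda>k. e k * measure (prodM M N) (SB N (B k))) \<longlonglongrightarrow> 0"
    and lim: "AE x in prodM M N. (\<lambda>k. ftr N P (B k) (K k) x) \<longlonglongrightarrow> P x"
  shows "(\<lambda>k. \<integral>\<^sup>+ x. ennreal \<bar>Qd M N P (B k) (K k) (e k) x - P x\<bar> \<partial>prodM M N) \<longlonglongrightarrow> 0"
proof -
  note Pi = P_int[OF dens]
  have Pm: "P \<in> borel_measurable (prodM M N)" and nn: "\<forall>x\<in>space (prodM M N). 0 \<le> P x"
    and one: "(\<integral>\<^sup>+ x. ennreal (P x) \<partial>prodM M N) = 1"
    using dens unfolding sym_prob_density_def by auto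
  have fI: "(\<lambda>k. integral\<^sup>L (prodM M N) (ftr N P (B k) (K k))) \<longlonglongrightarrow> integral\<^sup>L (prodM M N) P"
  proof (rule integral_dominated_convergence[where w=P])
    show "P \<in> borel_measurable (prodM M N)" by (rule Pm)
    show "ftr N P (B k) (K k) \<in> borel_measurable (prodM M N)" for k by (rule ftr_meas[OF Pm B1])
    show "integrable (prodM M N) P" by (rule Pi(1))
    show "AE x in prodM M N. (\<lambda>k. ftr N P (B k) (K k) x) \<longlonglongrightarrow> P x" by (rule lim)
    show "AE x in prodM M N. norm (ftr N P (B k) (K k) x) \<le> P x" for k
    proof (rule AE_I2)
      fix x assume "x \<in> space (prodM M N)"
      then have "0 \<le> P x" using nn by auto
      then show "norm (ftr N P (B k) (K k) x) \<le> P x"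
        unfolding ftr_def by (auto simp: indicator_def)
    qed
  qed
  define d where "d k = integral\<^sup>L (prodM M N) (ftr N P (B k) (K k)) + e k * measure (prodM M N) (SB N (B k))" for k
  have d1: "d \<longlonglongrightarrow> 1" unfolding d_def using tendsto_add[OF fI em0] Pi(2) by simp
  have Qeq: "Qd M N P (B k) (K k) (e k) x = (ftr N P (B k) (K k) x + e k * indicator (SB N (B k)) x) / d k" for k x
    unfolding Qd_def d_def by simp
  have ind0: "(\<lambda>k. e k * indicator (SB N (B k)) x) \<longlonglongrightarrow> 0" for x :: "nat \<Rightarrow> 'a"
  proof (rule tendsto_sandwich[OF _ _ tendsto_const e0])
    show "\<forall>\<^sub>F k in sequentially. 0 \<le> e k * indicator (SB N (B k)) x"
      using e by (intro always_eventually allI) (simp add: less_imp_le)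
    show "\<forall>\<^sub>F k in sequentially. e k * indicator (SB N (B k)) x \<le> e k"
      using e by (intro always_eventually allI) (simp add: indicator_def less_imp_le)
  qed
  have Qlim: "AE x in prodM M N. (\<lambda>k. Qd M N P (B k) (K k) (e k) x) \<longlonglongrightarrow> P x"
    using lim
  proof (rule AE_mp, intro AE_I2 impI)
    fix x assume "(\<lambda>k. ftr N P (B k) (K k) x) \<longlonglongrightarrow> P x"
    from tendsto_divide[OF tendsto_add[OF this ind0] d1]
    show "(\<lambda>k. Qd M N P (B k) (K k) (e k) x) \<longlonglongrightarrow> P x" unfolding Qeq by simp
  qed
  note QS = Q_sym[OF sf N dens B1 B2 B3 K e]
  have "(\<lambda>k. \<integral>\<^sup>+ x. norm (Qd M N P (B k) (K k) (e k) x - P x) \<partial>prodM M N) \<longlonglongrightarrow> 0"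
  proof (rule Scheffe_lemma2)
    show "Qd M N P (B k) (K k) (e k) \<in> borel_measurable (prodM M N)" for k
      using QS[of k] unfolding sym_prob_density_def by simp
    show "integrable (prodM M N) P" by (rule Pi(1))
    show "AE x in prodM M N. (\<lambda>k. Qd M N P (B k) (K k) (e k) x) \<longlonglongrightarrow> P x" by (rule Qlim)
    show "(\<integral>\<^sup>+ x. ennreal (norm (Qd M N P (B k) (K k) (e k) x)) \<partial>prodM M N)
          \<le> (\<integral>\<^sup>+ x. ennreal (norm (P x)) \<partial>prodM M N)" for k
    proof -
      have a: "(\<integral>\<^sup>+ x. ennreal (norm (Qd M N P (B k) (K k) (e k) x)) \<partial>prodM M N) = 1"
        using QS[of k] unfolding sym_prob_density_def
        by (metis (no_types, lifting) nn_integral_cong real_norm_def abs_of_nonneg)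
      have b: "(\<integral>\<^sup>+ x. ennreal (norm (P x)) \<partial>prodM M N) = 1"
        using nn one by (metis (no_types, lifting) nn_integral_cong real_norm_def abs_of_nonneg)
      show ?thesis using a b by simp
    qed
  qed
  then show ?thesis by (simp add: real_norm_def)
qed

lemma aux_bound:
  fixes p K e m :: real
  assumes "0 \<le> p" "p \<le> K" "0 < e" "0 \<le> m"
  shows "\<bar>(p + e) / (1 + e * m) - p\<bar> \<le> e * (1 + m * K)"
proof -
  have pos: "1 \<le> 1 + e * m" using assms by simp
  have eq: "(p + e) / (1 + e * m) - p = e * (1 - m * p) / (1 + e * m)"
    using pos by (simp add: field_simps)
  have "\<bar>1 - m * p\<bar> \<le> 1 + m * K"
  proof -
    have "0 \<le> m * p" using assms by simp
    then show ?thesis using mult_left_mono[OF assms(2) assms(4)] by (simp add: abs_le_iff)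
  qed
  then have n: "\<bar>e * (1 - m * p)\<bar> \<le> e * (1 + m * K)"
    using assms(3) by (simp add: abs_mult)
  have "\<bar>e * (1 - m * p) / (1 + e * m)\<bar> = \<bar>e * (1 - m * p)\<bar> / (1 + e * m)"
    using pos by simp
  also have "\<dots> \<le> \<bar>e * (1 - m * p)\<bar>"
    using pos by (simp add: divide_le_eq mult_le_cancel_left1 )
  finally show ?thesis using eq n by simp
qed

lemma part1:
  fixes M :: "'a measure" and N :: nat and P :: "(nat \<Rightarrow> 'a) \<Rightarrow> real"
  assumes sf: "sigma_finite_measure M" and ne: "emeasure M (space M) \<noteq> 0"
    and N: "N \<ge> 2" and dens: "sym_prob_density M N P"
  shows "\<exists>Ps :: nat \<Rightarrow> (nat \<Rightarrow> 'a) \<Rightarrow> real.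
            (\<forall>n. sym_prob_density M N (Ps n) \<and> lower_bound_cond M N (Ps n)) \<and>
            (\<lambda>n. \<integral>\<^sup>+ x. ennreal \<bar>Ps n x - P x\<bar> \<partial>prodM M N) \<longlonglongrightarrow> 0"
proof -
  obtain A where A1: "range A \<subseteq> sets M" and A2: "\<Union> (range A) = space M"
    and A3: "\<And>i. emeasure M (A i) \<noteq> \<infinity>" and A4: "incseq A"
    using sigma_finite_measure.sigma_finite_incseq[OF sf] by metis
  have "\<exists>k0. 0 < emeasure M (A k0)"
  proof (rule ccontr)
    assume "\<not> ?thesis"
    then have "\<And>k. emeasure M (A k) = 0" by (simp add: not_less)
    then have "(\<Squnion>n. emeasure M (A n)) = 0" by simp
    then show False using SUP_emeasure_incseq[OF A1 A4] A2 ne by simp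
  qed
  then obtain k0 where k0: "0 < emeasure M (A k0)" by blast
  define B where "B k = A (k + k0)" for k
  have B1: "B k \<in> sets M" for k unfolding B_def using A1 by auto
  have B2: "0 < emeasure M (B k)" for k
  proof -
    have "A k0 \<subseteq> B k" unfolding B_def using A4 by (simp add: incseq_def)
    then have "emeasure M (A k0) \<le> emeasure M (B k)" by (intro emeasure_mono B1)
    then show ?thesis using k0 by simp
  qed
  have B3: "emeasure M (B k) < \<infinity>" for k unfolding B_def using A3 by (simp add: less_top)
  define K where "K k = real k" for k
  define m where "m k = measure (prodM M N) (SB N (B k))" for k
  define e where "e k = inverse (real (Suc k) * (m k + 1))" for k
  have m0: "0 \<le> m k" for k unfolding m_def by simp
  have e: "0 < e k" for k unfolding e_def using m0[of k] by simp
  have ele: "e k \<le> inverse (real (Suc k))" for k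
    unfolding e_def
  proof (rule le_imp_inverse_le)
    show "real (Suc k) \<le> real (Suc k) * (m k + 1)" using m0[of k] by simp
  qed simp
  have emle: "e k * m k \<le> inverse (real (Suc k))" for k
  proof -
    have "e k * m k = inverse (real (Suc k)) * (m k / (m k + 1))"
      unfolding e_def using m0[of k] by (simp add: field_simps)
    moreover have "m k / (m k + 1) \<le> 1" using m0[of k] by simp
    moreover have "0 \<le> inverse (real (Suc k))" by simp
    ultimately show ?thesis by (metis mult_left_le)
  qed
  have emnn: "0 \<le> e k * m k" for k using e[of k] m0[of k] by simp
  have e0: "e \<longlonglongrightarrow> 0"
    by (rule tendsto_sandwich[OF _ _ tendsto_const LIMSEQ_inverse_real_of_nat])
       (use e ele in \<open>auto intro!: always_eventually less_imp_le\<close>)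
  have em0: "(\<lambda>k. e k * measure (prodM M N) (SB N (B k))) \<longlonglongrightarrow> 0"
    unfolding m_def[symmetric]
    by (rule tendsto_sandwich[OF _ _ tendsto_const LIMSEQ_inverse_real_of_nat])
       (use emnn emle in \<open>auto intro!: always_eventually\<close>)
  have nn: "\<forall>x\<in>space (prodM M N). 0 \<le> P x" using dens unfolding sym_prob_density_def by auto
  have lim: "AE x in prodM M N. (\<lambda>k. ftr N P (B k) (K k) x) \<longlonglongrightarrow> P x"
  proof (rule AE_I2)
    fix x assume x: "x \<in> space (prodM M N)"
    have xP: "x \<in> PiE {..<N} (\<lambda>_. space M)" using x unfolding space_prodM .
    have ev1: "\<forall>\<^sub>F k in sequentially. \<forall>i\<in>{..<N}. x i \<in> B k"
    proof (rule eventually_ball_finite)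
      show "\<forall>i\<in>{..<N}. \<forall>\<^sub>F k in sequentially. x i \<in> B k"
      proof
        fix i assume i: "i \<in> {..<N}"
        then have "x i \<in> space M" using xP by (auto simp: PiE_def Pi_def)
        then obtain j where j: "x i \<in> A j" using A2 by auto
        show "\<forall>\<^sub>F k in sequentially. x i \<in> B k"
          unfolding eventually_sequentially
        proof (intro exI allI impI)
          fix k assume "j \<le> k"
          then have "A j \<subseteq> B k" unfolding B_def using A4 by (simp add: incseq_def)
          then show "x i \<in> B k" using j by auto
        qed
      qed
    qed simp
    have ev2: "\<forall>\<^sub>F k in sequentially. P x \<le> K k"
      unfolding eventually_sequentially K_def
    proof (intro exI allI impI)
      fix k assume "nat \<lceil>P x\<rceil> \<le> k"
      then show "P x \<le> real k" by linarith
    qed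
    have "\<forall>\<^sub>F k in sequentially. ftr N P (B k) (K k) x = P x"
      using ev1 ev2
    proof eventually_elim
      case (elim k)
      have "x \<in> SB N (B k)" unfolding SB_def using elim(1) xP by (auto simp: PiE_def)
      then show ?case unfolding ftr_def using elim(2) nn x by auto
    qed
    then show "(\<lambda>k. ftr N P (B k) (K k) x) \<longlonglongrightarrow> P x" by (rule tendsto_eventually)
  qed
  have K: "0 \<le> K k" for k unfolding K_def by simp
  show ?thesis
  proof (intro exI[of _ "\<lambda>k. Qd M N P (B k) (K k) (e k)"] conjI allI)
    fix n
    show "sym_prob_density M N (Qd M N P (B n) (K n) (e n))" by (rule Q_sym[OF sf N dens B1 B2 B3 K e])
    show "lower_bound_cond M N (Qd M N P (B n) (K n) (e n))" by (rule Q_lb[OF sf N dens B1 B2 B3 K e])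
  next
    show "(\<lambda>k. \<integral>\<^sup>+ x. ennreal \<bar>Qd M N P (B k) (K k) (e k) x - P x\<bar> \<partial>prodM M N) \<longlonglongrightarrow> 0"
      by (rule conv_L1[OF sf N dens B1 B2 B3 K e e0 em0 lim])
  qed
qed

lemma part2:
  fixes M :: "'a measure" and N :: nat and P :: "(nat \<Rightarrow> 'a) \<Rightarrow> real"
  assumes sf: "sigma_finite_measure M" and ne: "emeasure M (space M) \<noteq> 0"
    and N: "N \<ge> 2" and dens: "sym_prob_density M N P"
    and fin: "emeasure M (space M) < \<infinity>" and bd: "esssup (prodM M N) (\<lambda>x. ereal \<bar>P x\<bar>) < \<infinity>"
  shows "\<exists>Ps :: nat \<Rightarrow> (nat \<Rightarrow> 'a) \<Rightarrow> real.
            (\<forall>n. sym_prob_density M N (Ps n) \<and> lower_bound_cond M N (Ps n)) \<and>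
            (\<lambda>n. \<integral>\<^sup>+ x. ennreal \<bar>Ps n x - P x\<bar> \<partial>prodM M N) \<longlonglongrightarrow> 0 \<and>
            (\<lambda>n. esssup (prodM M N) (\<lambda>x. ereal \<bar>Ps n x - P x\<bar>)) \<longlonglongrightarrow> 0"
proof -
  define s where "s = esssup (prodM M N) (\<lambda>x. ereal \<bar>P x\<bar>)"
  define K0 where "K0 = real_of_ereal (max 0 s)"
  have K0: "0 \<le> K0" unfolding K0_def by (simp add: real_of_ereal_pos)
  have sfin: "s < \<infinity>" using bd unfolding s_def .
  have sK: "s \<le> ereal K0"
  proof (cases s)
    case (real r)
    have "K0 = max 0 r" unfolding K0_def using real by (cases "0 \<le> r") (auto simp: max_def)
    then show ?thesis using real by simp
  next
    case PInf then show ?thesis using sfin by simp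
  next
    case MInf then show ?thesis by simp
  qed
  have aeK: "AE x in prodM M N. \<bar>P x\<bar> \<le> K0"
    using esssup_AE[of "\<lambda>x. ereal \<bar>P x\<bar>" "prodM M N"]
  proof eventually_elim
    case (elim x)
    then have "ereal \<bar>P x\<bar> \<le> ereal K0" using sK unfolding s_def by (rule order_trans)
    then show ?case by simp
  qed
  have Pm: "P \<in> borel_measurable (prodM M N)" and nn: "\<forall>x\<in>space (prodM M N). 0 \<le> P x"
    using dens unfolding sym_prob_density_def by auto
  note Pm[measurable]
  define B where "B = space M"
  have B1: "B \<in> sets M" unfolding B_def by simp
  have B2: "0 < emeasure M B" unfolding B_def using ne by (simp add: zero_less_iff_neq_zero)
  have B3: "emeasure M B < \<infinity>" unfolding B_def by (rule fin)
  have SBsp: "SB N B = space (prodM M N)" unfolding SB_def B_def space_prodM ..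
  define m where "m = measure (prodM M N) (SB N B)"
  have m0: "0 \<le> m" unfolding m_def by simp
  define e where "e k = inverse (real (Suc k))" for k
  have e: "0 < e k" for k unfolding e_def by simp
  have e0: "e \<longlonglongrightarrow> 0" unfolding e_def by (rule LIMSEQ_inverse_real_of_nat)
  have em0: "(\<lambda>k. e k * measure (prodM M N) (SB N B)) \<longlonglongrightarrow> 0"
    using tendsto_mult_left_zero[OF e0] by simp
  have feq: "AE x in prodM M N. ftr N P B K0 x = P x"
    using aeK
  proof (rule AE_mp, intro AE_I2 impI)
    fix x assume x: "x \<in> space (prodM M N)" and "\<bar>P x\<bar> \<le> K0"
    then show "ftr N P B K0 x = P x" unfolding ftr_def SBsp using nn by auto
  qed
  have lim: "AE x in prodM M N. (\<lambda>k. ftr N P B K0 x) \<longlonglongrightarrow> P x"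
    using feq by eventually_elim simp
  have intf: "integral\<^sup>L (prodM M N) (ftr N P B K0) = 1"
  proof -
    have "integral\<^sup>L (prodM M N) (ftr N P B K0) = integral\<^sup>L (prodM M N) P"
      by (rule integral_cong_AE[OF ftr_meas[OF Pm B1] Pm feq])
    then show ?thesis using P_int(2)[OF dens] by simp
  qed
  have Qm: "Qd M N P B K0 (e k) \<in> borel_measurable (prodM M N)" for k
    using Q_sym[OF sf N dens B1 B2 B3 K0 e] unfolding sym_prob_density_def by simp
  have aeQ: "AE x in prodM M N. \<bar>Qd M N P B K0 (e k) x - P x\<bar> \<le> e k * (1 + m * K0)" for k
    using aeK
  proof (rule AE_mp, intro AE_I2 impI)
    fix x assume x: "x \<in> space (prodM M N)" and px: "\<bar>P x\<bar> \<le> K0"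
    have "Qd M N P B K0 (e k) x = (P x + e k) / (1 + e k * m)"
      unfolding Qd_def intf m_def[symmetric] using x nn unfolding ftr_def SBsp
      using px by auto
    then show "\<bar>Qd M N P B K0 (e k) x - P x\<bar> \<le> e k * (1 + m * K0)"
      using aux_bound[of "P x" K0 "e k" m] nn x px e[of k] m0 by auto
  qed
  have sp_ne: "emeasure (prodM M N) (space (prodM M N)) \<noteq> 0"
    unfolding SBsp[symmetric] SB_emeasure[OF sf B1] using B2 by simp
  have ess: "(\<lambda>k. esssup (prodM M N) (\<lambda>x. ereal \<bar>Qd M N P B K0 (e k) x - P x\<bar>)) \<longlonglongrightarrow> 0"
  proof (rule tendsto_sandwich)
    show "\<forall>\<^sub>F k in sequentially. 0 \<le> esssup (prodM M N) (\<lambda>x. ereal \<bar>Qd M N P B K0 (e k) x - P x\<bar>)"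
    proof (intro always_eventually allI)
      fix k
      note Qm[measurable]
      have "esssup (prodM M N) (\<lambda>x. 0::ereal) \<le> esssup (prodM M N) (\<lambda>x. ereal \<bar>Qd M N P B K0 (e k) x - P x\<bar>)"
        by (rule esssup_mono) auto
      then show "0 \<le> esssup (prodM M N) (\<lambda>x. ereal \<bar>Qd M N P B K0 (e k) x - P x\<bar>)"
        using esssup_const[OF sp_ne, of "0::ereal"] by (metis (no_types))
    qed
    show "\<forall>\<^sub>F k in sequentially. esssup (prodM M N) (\<lambda>x. ereal \<bar>Qd M N P B K0 (e k) x - P x\<bar>)
            \<le> ereal (e k * (1 + m * K0))"
    proof (intro always_eventually allI)
      fix k
      note Qm[measurable]
      show "esssup (prodM M N) (\<lambda>x. ereal \<bar>Qd M N P B K0 (e k) x - P x\<bar>) \<le> ereal (e k * (1 + m * K0))"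
        by (rule esssup_I) (use aeQ[of k] in auto)
    qed
    show "(\<lambda>k. 0::ereal) \<longlonglongrightarrow> 0" by simp
    have "(\<lambda>k. e k * (1 + m * K0)) \<longlonglongrightarrow> 0" using tendsto_mult_left_zero[OF e0] by simp
    then show "(\<lambda>k. ereal (e k * (1 + m * K0))) \<longlonglongrightarrow> 0"
      using tendsto_ereal[of _ 0] by (simp add: zero_ereal_def)
  qed
  show ?thesis
  proof (intro exI[of _ "\<lambda>k. Qd M N P B K0 (e k)"] conjI allI)
    fix n
    show "sym_prob_density M N (Qd M N P B K0 (e n))" by (rule Q_sym[OF sf N dens B1 B2 B3 K0 e])
    show "lower_bound_cond M N (Qd M N P B K0 (e n))" by (rule Q_lb[OF sf N dens B1 B2 B3 K0 e])
  next
    show "(\<lambda>k. \<integral>\<^sup>+ x. ennreal \<bar>Qd M N P B K0 (e k) x - P x\<bar> \<partial>prodM M N) \<longlonglongrightarrow> 0"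
      using conv_L1[of M N P "\<lambda>_. B" "\<lambda>_. K0" e, OF sf N dens B1 B2 B3 K0 e e0 em0 lim] by simp
    show "(\<lambda>k. esssup (prodM M N) (\<lambda>x. ereal \<bar>Qd M N P B K0 (e k) x - P x\<bar>)) \<longlonglongrightarrow> 0"
      by (rule ess)
  qed
qed

theorem theorem4:
  fixes M :: "'a measure" and N :: nat and P :: "(nat \<Rightarrow> 'a) \<Rightarrow> real"
  assumes "complete_measure M" and "sigma_finite_measure M"
    and "emeasure M (space M) \<noteq> 0"
    and "N \<ge> 2"
    and "sym_prob_density M N P"
  shows "(\<exists>Ps :: nat \<Rightarrow> (nat \<Rightarrow> 'a) \<Rightarrow> real.
            (\<forall>n. sym_prob_density M N (Ps n) \<and> lower_bound_cond M N (Ps n)) \<and>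
            (\<lambda>n. \<integral>\<^sup>+ x. ennreal \<bar>Ps n x - P x\<bar> \<partial>prodM M N) \<longlonglongrightarrow> 0)
       \<and> (emeasure M (space M) < \<infinity> \<and> esssup (prodM M N) (\<lambda>x. ereal \<bar>P x\<bar>) < \<infinity> \<longrightarrow>
          (\<exists>Ps :: nat \<Rightarrow> (nat \<Rightarrow> 'a) \<Rightarrow> real.
            (\<forall>n. sym_prob_density M N (Ps n) \<and> lower_bound_cond M N (Ps n)) \<and>
            (\<lambda>n. \<integral>\<^sup>+ x. ennreal \<bar>Ps n x - P x\<bar> \<partial>prodM M N) \<longlonglongrightarrow> 0 \<and>
            (\<lambda>n. esssup (prodM M N) (\<lambda>x. ereal \<bar>Ps n x - P x\<bar>)) \<longlonglongrightarrow> 0))"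
  using part1[OF assms(2,3,4,5)] part2[OF assms(2,3,4,5)] by blast

end
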